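(* Let $p_1=(\alpha,r,\delta)$ be a condition, $D\subseteq\ell^2$ a dense open set, and $N\in\omega$. Then there exists a condition $p_2=(\beta,s,\eta)$ such that $p_2<p_1$, $U_{s,\eta}\subseteq D$, and $|\beta|>N$.
   Context: $\omega=\{0,1,2,\dots\}$; $\ell^2$ is the Hilbert space of square-summable real sequences indexed by $\omega$. For nonempty $q\in\mathbb Q^{<\omega}$ and rational $\varepsilon>0$, $U_{q,\varepsilon}=\{x\in\ell^2:\lVert (x\upharpoonright|q|)-q\rVert_\infty<\varepsilon|q|^{-1/2}\text{ and }\lVert x\upharpoonright[|q|,\infty)\rVert_2<\varepsilon\}$; for $q$ empty, $U_{q,\varepsilon}=\{x:\lVert x\rVert_2<\varepsilon\}$. For $w\in\{1,2\}^\omega$, $B_w(x)(i)=w(i)x(i+1)$. For $\alpha\in\{1,2\}^{<\omega}$, $\alpha^+\in\{1,2\}^\omega$ is $\alpha$ followed by all $2$'s. A condition is a triple $(\alpha,r,\delta)\in\{1,2\}^{<\omega}\times\mathbb Q^{<\omega}\times(\mathbb Q\cap(0,1))$ with $|\alpha|\ge|r|$ and $\delta<2^{-|\alpha|}$. For conditions $p_1=(\alpha_1,r_1,\delta_1)$ and $p_2=(\alpha_2,r_2,\delta_2)$, $p_2<p_1$ means: $\alpha_1$ is an initial segment of $\alpha_2$; the closure $\overline{U_{r_2,\delta_2}}\subseteq U_{r_1,\delta_1}$; and for all $k\in[|\alpha_1|,|\alpha_2|)$, $B^k_{\alpha_2^+}[U_{r_2,\delta_2}]\subseteq\{y\in\ell^2:\lVert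 y\rVert_2<1\}$. *)

theory Defs
  imports "HOL-Analysis.Analysis"
begin

definition l2 :: "(nat \<Rightarrow> real) set" where
  "l2 = {x. summable (\<lambda>i. (x i)\<^sup>2)}"

definition l2norm :: "(nat \<Rightarrow> real) \<Rightarrow> real" where
  "l2norm x = sqrt (\<Sum>i. (x i)\<^sup>2)"

definition l2dist :: "(nat \<Rightarrow> real) \<Rightarrow> (nat \<Rightarrow> real) \<Rightarrow> real" where
  "l2dist x y = l2norm (\<lambda>i. x i - y i)"

definition l2_open :: "(nat \<Rightarrow> real) set \<Rightarrow> bool" where
  "l2_open S \<longleftrightarrow> S \<subseteq> l2 \<and>
     (\<forall>x\<in>S. \<exists>e>0. \<forall>y\<in>l2. l2dist x y < e \<longrightarrow> y \<in> S)"

definition l2_dense :: "(nat \<Rightarrow> real) set \<Rightarrow> bool" where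
  "l2_dense S \<longleftrightarrow> (\<forall>x\<in>l2. \<forall>e>0. \<exists>y\<in>S. l2dist x y < e)"

definition l2_closure :: "(nat \<Rightarrow> real) set \<Rightarrow> (nat \<Rightarrow> real) set" where
  "l2_closure S = {x\<in>l2. \<forall>e>0. \<exists>y\<in>S. l2dist x y < e}"

definition U :: "rat list \<Rightarrow> rat \<Rightarrow> (nat \<Rightarrow> real) set" where
  "U q \<epsilon> =
    (if q = [] then {x\<in>l2. l2norm x < of_rat \<epsilon>}
     else {x\<in>l2. (\<forall>i<length q. \<bar>x i - of_rat (q ! i)\<bar> < of_rat \<epsilon> / sqrt (real (length q)))
                 \<and> l2norm (\<lambda>i. x (i + length q)) < of_rat \<epsilon>})"

definition Bw :: "(nat \<Rightarrow> nat) \<Rightarrow> (nat \<Rightarrow> real) \<Rightarrow> (nat \<Rightarrow> real)" where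
  "Bw w x = (\<lambda>i. real (w i) * x (Suc i))"

definition plus_seq :: "nat list \<Rightarrow> (nat \<Rightarrow> nat)" where
  "plus_seq \<alpha> = (\<lambda>i. if i < length \<alpha> then \<alpha> ! i else 2)"

definition is_condition :: "nat list \<Rightarrow> rat list \<Rightarrow> rat \<Rightarrow> bool" where
  "is_condition \<alpha> r \<delta> \<longleftrightarrow> set \<alpha> \<subseteq> {1, 2} \<and> 0 < \<delta> \<and> \<delta> < 1 \<and>
     length \<alpha> \<ge> length r \<and> \<delta> < 1 / 2 ^ length \<alpha>"

definition cond_less :: "nat list \<Rightarrow> rat list \<Rightarrow> rat \<Rightarrow> nat list \<Rightarrow> rat list \<Rightarrow> rat \<Rightarrow> bool" where
  "cond_less \<alpha>2 r2 \<delta>2 \<alpha>1 r1 \<delta>1 \<longleftrightarrow>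
     (\<exists>t. \<alpha>2 = \<alpha>1 @ t) \<and>
     l2_closure (U r2 \<delta>2) \<subseteq> U r1 \<delta>1 \<and>
     (\<forall>k. length \<alpha>1 \<le> k \<and> k < length \<alpha>2 \<longrightarrow>
        (\<forall>x\<in>U r2 \<delta>2. l2norm ((Bw (plus_seq \<alpha>2) ^^ k) x) < 1))"

end

theory Submission
  imports Defs
begin

definition Q :: "(nat \<Rightarrow> real) \<Rightarrow> real" where
  "Q x = (\<Sum>i. (x i)\<^sup>2)"

lemma l2norm_Q: "l2norm x = sqrt (Q x)"
  by (simp add: l2norm_def Q_def)

lemma Q_nonneg: "x \<in> l2 \<Longrightarrow> 0 \<le> Q x"
  unfolding Q_def l2_def by (auto intro: suminf_nonneg)

lemma sqrt_lt_sq: "0 \<le> a \<Longrightarrow> 0 < e \<Longrightarrow> a < e\<^sup>2 \<Longrightarrow> sqrt a < e"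
  using real_sqrt_less_mono[of a "e\<^sup>2"] by simp

lemma sq_lt_of_sqrt: "0 \<le> a \<Longrightarrow> sqrt a < e \<Longrightarrow> a < e\<^sup>2"
  using power_strict_mono[of "sqrt a" e 2] by simp

lemma Q_comb:
  assumes "a \<in> l2" "b \<in> l2" "\<And>i. \<bar>c i\<bar> \<le> \<bar>a i\<bar> + \<bar>b i\<bar>"
  shows "c \<in> l2 \<and> Q c \<le> 2 * Q a + 2 * Q b"
proof -
  have pt: "(c i)\<^sup>2 \<le> 2 * (a i)\<^sup>2 + 2 * (b i)\<^sup>2" for i
  proof -
    have "\<bar>c i\<bar>\<^sup>2 \<le> (\<bar>a i\<bar> + \<bar>b i\<bar>)\<^sup>2"
      using assms(3)[of i] by (intro power_mono) auto
    also have "\<dots> \<le> 2 * (a i)\<^sup>2 + 2 * (b i)\<^sup>2"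
    proof -
      have h1: "(\<bar>a i\<bar> + \<bar>b i\<bar>)\<^sup>2 = \<bar>a i\<bar>\<^sup>2 + 2 * \<bar>a i\<bar> * \<bar>b i\<bar> + \<bar>b i\<bar>\<^sup>2"
        by (simp add: power2_eq_square algebra_simps)
      have h2: "(\<bar>a i\<bar> - \<bar>b i\<bar>)\<^sup>2 = \<bar>a i\<bar>\<^sup>2 - 2 * \<bar>a i\<bar> * \<bar>b i\<bar> + \<bar>b i\<bar>\<^sup>2"
        by (simp add: power2_eq_square algebra_simps)
      have h3: "0 \<le> (\<bar>a i\<bar> - \<bar>b i\<bar>)\<^sup>2" by (rule zero_le_power2)
      have h4: "\<bar>a i\<bar>\<^sup>2 = (a i)\<^sup>2" "\<bar>b i\<bar>\<^sup>2 = (b i)\<^sup>2" by simp_all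
      show ?thesis using h1 h2 h3 h4 by linarith
    qed
    finally show ?thesis by simp
  qed
  have sa: "summable (\<lambda>i. (a i)\<^sup>2)" "summable (\<lambda>i. (b i)\<^sup>2)" using assms(1,2) by (auto simp: l2_def)
  have sg: "summable (\<lambda>i. 2 * (a i)\<^sup>2 + 2 * (b i)\<^sup>2)"
    using sa by (intro summable_add summable_mult) auto
  have sc: "summable (\<lambda>i. (c i)\<^sup>2)"
    by (rule summable_comparison_test'[OF sg]) (use pt in auto)
  have "Q c \<le> (\<Sum>i. 2 * (a i)\<^sup>2 + 2 * (b i)\<^sup>2)"
    unfolding Q_def by (rule suminf_le[OF pt sc sg])
  also have "\<dots> = 2 * Q a + 2 * Q b"
    unfolding Q_def using sa by (simp add: suminf_add[symmetric] suminf_mult[symmetric])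
  finally show ?thesis using sc by (simp add: l2_def)
qed

lemma Q_split: "x \<in> l2 \<Longrightarrow> Q x = (\<Sum>i<n. (x i)\<^sup>2) + Q (\<lambda>i. x (i + n))"
  unfolding Q_def l2_def using suminf_split_initial_segment[of "\<lambda>i. (x i)\<^sup>2" n] by simp

lemma l2_shift: "x \<in> l2 \<Longrightarrow> (\<lambda>i. x (i + n)) \<in> l2"
  unfolding l2_def using summable_iff_shift[of "\<lambda>i. (x i)\<^sup>2" n] by simp

lemma Q_shift_le: "x \<in> l2 \<Longrightarrow> Q (\<lambda>i. x (i + n)) \<le> Q x"
  using Q_split[of x n] by (simp add: sum_nonneg)

lemma Q_head_le: "x \<in> l2 \<Longrightarrow> (\<Sum>i<n. (x i)\<^sup>2) \<le> Q x"
  using Q_split[of x n] Q_nonneg[OF l2_shift, of x n] by simp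

lemma coord_le: "x \<in> l2 \<Longrightarrow> (x i)\<^sup>2 \<le> Q x"
proof -
  assume "x \<in> l2"
  have "0 \<le> (\<Sum>j<i. (x j)\<^sup>2)" by (simp add: sum_nonneg)
  then show ?thesis using Q_head_le[OF \<open>x \<in> l2\<close>, of "Suc i"] by simp
qed

lemma tail_small: "x \<in> l2 \<Longrightarrow> 0 < e \<Longrightarrow> \<exists>N. \<forall>n\<ge>N. Q (\<lambda>i. x (i + n)) < e"
proof -
  assume "x \<in> l2" "0 < e"
  then have "summable (\<lambda>i. (x i)\<^sup>2)" by (simp add: l2_def)
  then obtain N where N: "\<forall>n\<ge>N. norm (\<Sum>i. (x (i + n))\<^sup>2) < e"
    using suminf_exist_split[OF \<open>0 < e\<close>] by blast
  have "Q (\<lambda>i. x (i + n)) < e" if "n \<ge> N" for n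
  proof -
    have "norm (\<Sum>i. (x (i + n))\<^sup>2) < e" using N that by blast
    then show ?thesis unfolding Q_def by simp
  qed
  then show ?thesis by blast
qed

lemma Q_sym: "Q (\<lambda>i. x i - y i) = Q (\<lambda>i. y i - x i)"
  unfolding Q_def by (simp add: power2_commute)

lemma l2dist_Q: "0 < e \<Longrightarrow> x \<in> l2 \<Longrightarrow> y \<in> l2 \<Longrightarrow> l2dist x y < e \<longleftrightarrow> Q (\<lambda>i. x i - y i) < e\<^sup>2"
proof -
  assume "0 < e" "x \<in> l2" "y \<in> l2"
  then have "(\<lambda>i. x i - y i) \<in> l2" using Q_comb[of x y "\<lambda>i. x i - y i"] by auto
  then have q0: "0 \<le> Q (\<lambda>i. x i - y i)" by (rule Q_nonneg)
  have d: "l2dist x y = sqrt (Q (\<lambda>i. x i - y i))" unfolding l2dist_def l2norm_Q ..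
  show ?thesis unfolding d using sqrt_lt_sq[OF q0 \<open>0 < e\<close>] sq_lt_of_sqrt[OF q0] by blast
qed

lemma Bw_pow: "(Bw w ^^ k) x = (\<lambda>i. (\<Prod>j<k. real (w (i + j))) * x (i + k))"
proof (induction k arbitrary: x)
  case 0 then show ?case by simp
next
  case (Suc k)
  have "(Bw w ^^ Suc k) x = (Bw w ^^ k) (Bw w x)" by (simp only: funpow_Suc_right o_apply)
  also have "\<dots> = (\<lambda>i. (\<Prod>j<k. real (w (i + j))) * Bw w x (i + k))"
    by (rule Suc.IH)
  also have "\<dots> = (\<lambda>i. (\<Prod>j<Suc k. real (w (i + j))) * x (i + Suc k))"
    by (simp add: Bw_def mult.assoc)
  finally show ?case .
qed

lemma W_le:
  assumes w2: "\<And>i. real (w i) \<le> 2" and w1: "\<And>i. a \<le> i \<Longrightarrow> i < n \<Longrightarrow> w i = 1"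
  shows "i + k \<le> n \<Longrightarrow> (\<Prod>j<k. real (w (i + j))) \<le> 2 ^ (min k a)"
proof (induction k)
  case 0 then show ?case by simp
next
  case (Suc k)
  have ik: "i + k \<le> n" using Suc.prems by linarith
  have IH: "(\<Prod>j<k. real (w (i + j))) \<le> 2 ^ (min k a)" using Suc.IH[OF ik] .
  have nn: "0 \<le> (\<Prod>j<k. real (w (i + j)))" by (rule prod_nonneg) simp
  have p: "(\<Prod>j<Suc k. real (w (i + j))) = (\<Prod>j<k. real (w (i + j))) * real (w (i + k))"
    by (rule prod.lessThan_Suc)
  show ?case
  proof (cases "k < a")
    case True
    then have m1: "min (Suc k) a = Suc k" and m2: "min k a = k" by linarith+
    have IH': "(\<Prod>j<k. real (w (i + j))) \<le> 2 ^ k" using IH unfolding m2 .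
    have q: "(\<Prod>j<k. real (w (i + j))) * real (w (i + k)) \<le> 2 ^ k * 2"
      using nn by (intro mult_mono[OF IH' w2]) simp_all
    have "(2::real) ^ min (Suc k) a = 2 ^ k * 2" unfolding m1 by (rule power_Suc2)
    then show ?thesis using p q by linarith
  next
    case False
    have "a \<le> i + k" "i + k < n" using False Suc.prems by linarith+
    then have "w (i + k) = 1" by (rule w1)
    then have r: "(\<Prod>j<Suc k. real (w (i + j))) = (\<Prod>j<k. real (w (i + j)))" unfolding p by simp
    have "min (Suc k) a = min k a" using False by linarith
    then show ?thesis using IH r by metis
  qed
qed

lemma shift_bound:
  fixes x y z :: "nat \<Rightarrow> real" and w :: "nat \<Rightarrow> nat"
  assumes xl: "x \<in> l2" and yl: "y \<in> l2" and zl: "z \<in> l2"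
    and w2: "\<And>i. real (w i) \<le> 2" and w1: "\<And>i. a \<le> i \<Longrightarrow> i < n \<Longrightarrow> w i = 1"
    and ak: "a \<le> k" "k < n"
    and E0: "0 \<le> E"
    and head: "\<And>m. m < n \<Longrightarrow> \<bar>x m - y m\<bar> \<le> 2 * E / sqrt n"
    and tailx: "Q (\<lambda>i. x (i + n)) < E\<^sup>2"
    and z0: "\<And>m. a \<le> m \<Longrightarrow> z m = 0"
    and zy: "Q (\<lambda>i. z i - y i) \<le> c\<^sup>2"
    and Ec: "E \<le> c" and c_def: "c = 1 / (8 * 2 ^ a)"
    and En: "2 ^ n * E < 1"
  shows "Q ((Bw w ^^ k) x) < 1"
proof -
  define W where "W i = (\<Prod>j<k. real (w (i + j)))" for i
  have B: "(Bw w ^^ k) x = (\<lambda>i. W i * x (i + k))" by (simp add: Bw_pow W_def)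
  have W0: "0 \<le> W i" for i unfolding W_def by (simp add: prod_nonneg)
  have Wk: "W i \<le> 2 ^ k" for i unfolding W_def
    by (rule prod_le_power) (use w2 in auto)
  have Wa: "W i \<le> 2 ^ a" if "i + k < n" for i
    using W_le[of w a n i k, OF w2 w1] that ak unfolding W_def by (simp add: min_absorb2)
  define A :: real where "A = 2 ^ a"
  define K :: real where "K = 2 ^ k"
  have A0: "0 < A" "0 < K" by (auto simp: A_def K_def)
  define h where "h m = (if m < k then 0 else if m < n then A\<^sup>2 * (x m)\<^sup>2 else K\<^sup>2 * (x m)\<^sup>2)" for m
  have h0: "0 \<le> h m" for m by (simp add: h_def)
  have sx: "summable (\<lambda>m. (x m)\<^sup>2)" using xl by (simp add: l2_def)
  have hs: "summable h"
  proof (rule summable_comparison_test'[of "\<lambda>m. (A\<^sup>2 + K\<^sup>2) * (x m)\<^sup>2"])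
    show "summable (\<lambda>m. (A\<^sup>2 + K\<^sup>2) * (x m)\<^sup>2)" using sx by (rule summable_mult)
    show "norm (h m) \<le> (A\<^sup>2 + K\<^sup>2) * (x m)\<^sup>2" for m
      using h0[of m] by (auto simp: h_def algebra_simps)
  qed
  have pt: "(W i * x (i + k))\<^sup>2 \<le> h (i + k)" for i
  proof (cases "i + k < n")
    case True
    have "(W i)\<^sup>2 \<le> A\<^sup>2" unfolding A_def using Wa[OF True] W0[of i] by (intro power_mono) auto
    then show ?thesis using True by (simp add: h_def power_mult_distrib mult_right_mono)
  next
    case False
    have "(W i)\<^sup>2 \<le> K\<^sup>2" unfolding K_def using Wk[of i] W0[of i] by (intro power_mono) auto
    then show ?thesis using False by (simp add: h_def power_mult_distrib mult_right_mono)
  qed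
  have hks: "summable (\<lambda>i. h (i + k))" using hs by simp
  have Bs: "summable (\<lambda>i. (W i * x (i + k))\<^sup>2)"
    by (rule summable_comparison_test'[OF hks]) (use pt in auto)
  have e1: "Q ((Bw w ^^ k) x) \<le> (\<Sum>i. h (i + k))"
    unfolding B Q_def by (rule suminf_le[OF pt Bs hks])
  have e2: "(\<Sum>i. h (i + k)) = suminf h"
  proof -
    have "(\<Sum>m<k. h m) = 0" by (simp add: h_def)
    then show ?thesis using suminf_minus_initial_segment[OF hs, of k] by simp
  qed
  have e3: "suminf h = (\<Sum>i. h (i + n)) + (\<Sum>m<n. h m)"
    by (rule suminf_split_initial_segment[OF hs])
  have e4: "(\<Sum>i. h (i + n)) = K\<^sup>2 * Q (\<lambda>i. x (i + n))"
  proof -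
    have "(\<lambda>i. h (i + n)) = (\<lambda>i. K\<^sup>2 * (x (i + n))\<^sup>2)" using ak by (auto simp: h_def)
    moreover have "summable (\<lambda>i. (x (i + n))\<^sup>2)" using summable_iff_shift[of "\<lambda>m. (x m)\<^sup>2" n] sx by simp
    ultimately show ?thesis unfolding Q_def by (simp add: suminf_mult)
  qed
  have e5: "(\<Sum>m<n. h m) \<le> (\<Sum>m<n. A\<^sup>2 * (8 * E\<^sup>2 / n) + A\<^sup>2 * 2 * (z m - y m)\<^sup>2)"
  proof (rule sum_mono)
    fix m assume "m \<in> {..<n}"
    then have mn: "m < n" by simp
    show "h m \<le> A\<^sup>2 * (8 * E\<^sup>2 / n) + A\<^sup>2 * 2 * (z m - y m)\<^sup>2"
    proof (cases "m < k")
      case True then show ?thesis by (simp add: h_def)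
    next
      case False
      then have zm: "z m = 0" using z0 ak by auto
      have d0: "\<bar>x m - y m\<bar>\<^sup>2 \<le> (2 * E / sqrt n)\<^sup>2"
        using head[OF mn] by (intro power_mono) auto
      have d1: "(2 * E / sqrt n)\<^sup>2 = 4 * E\<^sup>2 / n" using mn by (simp add: power_divide power_mult_distrib)
      have d: "(x m - y m)\<^sup>2 \<le> 4 * E\<^sup>2 / n" using d0 d1 by simp
      have d2: "(x m)\<^sup>2 \<le> 2 * (x m - y m)\<^sup>2 + 2 * (y m)\<^sup>2"
        using zero_le_power2[of "x m - 2 * y m"] by (simp add: power2_eq_square algebra_simps)
      have "(x m)\<^sup>2 \<le> 8 * E\<^sup>2 / n + 2 * (z m - y m)\<^sup>2" using d d2 zm by simp
      then have "A\<^sup>2 * (x m)\<^sup>2 \<le> A\<^sup>2 * (8 * E\<^sup>2 / n + 2 * (z m - y m)\<^sup>2)"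
        by (rule mult_left_mono) simp
      then show ?thesis using False mn by (simp add: h_def algebra_simps)
    qed
  qed
  have e6: "(\<Sum>m<n. A\<^sup>2 * (8 * E\<^sup>2 / n) + A\<^sup>2 * 2 * (z m - y m)\<^sup>2)
      = A\<^sup>2 * 8 * E\<^sup>2 + A\<^sup>2 * 2 * (\<Sum>m<n. (z m - y m)\<^sup>2)"
    using ak by (simp add: sum.distrib sum_distrib_left[symmetric])
  have e7: "(\<Sum>m<n. (z m - y m)\<^sup>2) \<le> c\<^sup>2"
  proof -
    have "(\<lambda>i. z i - y i) \<in> l2" using Q_comb[OF zl yl, of "\<lambda>i. z i - y i"] by auto
    then show ?thesis using Q_head_le[of "\<lambda>i. z i - y i" n] zy by simp
  qed
  have e8: "A\<^sup>2 * 2 * (\<Sum>m<n. (z m - y m)\<^sup>2) \<le> A\<^sup>2 * 2 * c\<^sup>2"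
    using e7 by (intro mult_left_mono) auto
  have bound: "Q ((Bw w ^^ k) x) \<le> K\<^sup>2 * Q (\<lambda>i. x (i + n)) + (A\<^sup>2 * 8 * E\<^sup>2 + A\<^sup>2 * 2 * c\<^sup>2)"
    using e1 e2 e3 e4 e5 e6 e8 by linarith
  have Ac: "A * c = 1 / 8" by (simp add: c_def A_def)
  have "A * E \<le> A * c" using Ec A0 by (intro mult_left_mono) auto
  then have AE: "A * E \<le> 1 / 8" using Ac by linarith
  have AE2: "(A * E)\<^sup>2 \<le> 1 / 64" using power_mono[OF AE, of 2] A0 E0 by (simp add: power_divide)
  have t1: "A\<^sup>2 * 8 * E\<^sup>2 + A\<^sup>2 * 2 * c\<^sup>2 \<le> 10 / 64"
  proof -
    have g1: "A\<^sup>2 * 8 * E\<^sup>2 = 8 * (A * E)\<^sup>2" by (simp add: power_mult_distrib)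
    have g2: "A\<^sup>2 * 2 * c\<^sup>2 = 2 * (A * c)\<^sup>2" by (simp add: power_mult_distrib)
    have g3: "(A * c)\<^sup>2 = 1 / 64" by (subst Ac) (simp add: power_divide)
    show ?thesis using g1 g2 g3 AE2 by linarith
  qed
  have "(2::real) ^ Suc k \<le> 2 ^ n" using ak by (intro power_increasing) auto
  then have "2 * K \<le> 2 ^ n" unfolding K_def by simp
  then have "2 * K * E \<le> 2 ^ n * E" using E0 by (rule mult_right_mono)
  then have KE: "2 * (K * E) < 1" using En by (simp add: mult.assoc)
  have KE0: "0 \<le> K * E" using A0 E0 by simp
  have f1: "K\<^sup>2 * Q (\<lambda>i. x (i + n)) \<le> K\<^sup>2 * E\<^sup>2" using tailx by (intro mult_left_mono) auto
  have f2: "K\<^sup>2 * E\<^sup>2 = (K * E)\<^sup>2" by (simp add: power_mult_distrib)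
  have f3: "(K * E)\<^sup>2 \<le> 1 / 4" using power_mono[of "K * E" "1/2" 2] KE KE0 by (simp add: power_divide)
  show ?thesis using bound t1 f1 f2 f3 by linarith
qed


theorem lemma10:
  fixes \<alpha> :: "nat list" and r :: "rat list" and \<delta> :: rat
    and D :: "(nat \<Rightarrow> real) set" and N :: nat
  assumes "is_condition \<alpha> r \<delta>"
    and "D \<subseteq> l2" and "l2_open D" and "l2_dense D"
  shows "\<exists>\<beta> s \<eta>. is_condition \<beta> s \<eta> \<and> cond_less \<beta> s \<eta> \<alpha> r \<delta> \<and>
           U s \<eta> \<subseteq> D \<and> length \<beta> > N"
proof -
  have a12: "set \<alpha> \<subseteq> {1, 2}" and d0: "0 < \<delta>" and rlen: "length r \<le> length \<alpha>"
    using assms(1) by (auto simp: is_condition_def)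
  define a where "a = length \<alpha>"
  define z where "z = (\<lambda>i. if i < length r then real_of_rat (r ! i) else 0)"
  have zl: "z \<in> l2" unfolding l2_def mem_Collect_eq
    by (rule summable_finite[of "{..<length r}"]) (auto simp: z_def)
  have z0: "\<And>m. a \<le> m \<Longrightarrow> z m = 0" using rlen by (auto simp: z_def a_def)
  define D0 :: real where "D0 = real_of_rat \<delta>"
  have D0pos: "0 < D0" using d0 by (simp add: D0_def)
  define dd :: real where "dd = D0 / sqrt (real (length r) + 1)"
  have sq1: "1 \<le> sqrt (real (length r) + 1)" by simp
  have ddpos: "0 < dd" unfolding dd_def using D0pos sq1 by simp
  have ddle: "dd \<le> D0" unfolding dd_def using D0pos sq1
    by (simp add: divide_le_eq)
  have Uz: "w \<in> U r \<delta>" if wl: "w \<in> l2" and wz: "Q (\<lambda>i. w i - z i) < dd\<^sup>2" for w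
  proof -
    have wzl: "(\<lambda>i. w i - z i) \<in> l2" using Q_comb[OF wl zl, of "\<lambda>i. w i - z i"] by auto
    have dd2: "dd\<^sup>2 \<le> D0\<^sup>2" using ddle ddpos by (intro power_mono) auto
    have tl: "Q (\<lambda>i. w (i + length r)) < D0\<^sup>2"
    proof -
      have "(\<lambda>i. w (i + length r)) = (\<lambda>i. (\<lambda>i. w i - z i) (i + length r))" by (auto simp: z_def)
      then have "Q (\<lambda>i. w (i + length r)) \<le> Q (\<lambda>i. w i - z i)" using Q_shift_le[OF wzl, of "length r"] by simp
      then show ?thesis using wz dd2 by linarith
    qed
    have tl': "l2norm (\<lambda>i. w (i + length r)) < D0"
      unfolding l2norm_Q using sqrt_lt_sq[OF Q_nonneg[OF l2_shift[OF wl]] D0pos tl] .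
    show ?thesis
    proof (cases "r = []")
      case True
      then show ?thesis using tl' wl by (simp add: U_def D0_def)
    next
      case False
      have co: "\<bar>w i - real_of_rat (r ! i)\<bar> < D0 / sqrt (real (length r))" if "i < length r" for i
      proof -
        have "(w i - z i)\<^sup>2 \<le> Q (\<lambda>i. w i - z i)" using coord_le[OF wzl, of i] by simp
        then have "\<bar>w i - z i\<bar>\<^sup>2 < dd\<^sup>2" using wz by simp
        then have "\<bar>w i - z i\<bar> < dd" by (rule power_less_imp_less_base) (simp add: less_imp_le[OF ddpos])
        moreover have "dd \<le> D0 / sqrt (real (length r))"
          unfolding dd_def using divide_left_mono[of "sqrt (real (length r))" "sqrt (real (length r) + 1)" D0] False D0pos by simp
        moreover have "z i = real_of_rat (r ! i)" using that by (simp add: z_def)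
        ultimately show ?thesis by linarith
      qed
      show ?thesis using False co tl' wl by (simp add: U_def D0_def)
    qed
  qed
  define c :: real where "c = 1 / (8 * 2 ^ a)"
  have cpos: "0 < c" by (simp add: c_def)
  define \<rho> where "\<rho> = min (dd / 2) c"
  have \<rho>pos: "0 < \<rho>" using ddpos cpos by (simp add: \<rho>_def)
  obtain y where yD: "y \<in> D" and zy: "l2dist z y < \<rho>"
    using assms(4) zl \<rho>pos unfolding l2_dense_def by blast
  have yl: "y \<in> l2" using yD assms(2) by blast
  have Qzy: "Q (\<lambda>i. z i - y i) < \<rho>\<^sup>2" using zy l2dist_Q[OF \<rho>pos zl yl] by simp
  have \<rho>2: "\<rho>\<^sup>2 \<le> c\<^sup>2" "\<rho>\<^sup>2 \<le> (dd/2)\<^sup>2" using \<rho>pos by (auto intro!: power_mono simp: \<rho>_def)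
  obtain \<epsilon>D where eDpos: "0 < \<epsilon>D" and eD: "\<forall>w\<in>l2. l2dist y w < \<epsilon>D \<longrightarrow> w \<in> D"
    using assms(3) yD unfolding l2_open_def by blast
  define \<epsilon> where "\<epsilon> = min \<epsilon>D (dd / 2)"
  have epos: "0 < \<epsilon>" using eDpos ddpos by (simp add: \<epsilon>_def)
  have e2: "\<epsilon>\<^sup>2 \<le> \<epsilon>D\<^sup>2" "\<epsilon>\<^sup>2 \<le> (dd/2)\<^sup>2" using epos by (auto intro!: power_mono simp: \<epsilon>_def)
  have P2: "w \<in> D" if wl: "w \<in> l2" and wy: "Q (\<lambda>i. w i - y i) < \<epsilon>\<^sup>2" for w
  proof -
    have "Q (\<lambda>i. y i - w i) < \<epsilon>D\<^sup>2" using wy e2 Q_sym[of w y] by linarith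
    then have "l2dist y w < \<epsilon>D" using l2dist_Q[OF eDpos yl wl] by simp
    then show ?thesis using eD wl by blast
  qed
  have P3: "w \<in> U r \<delta>" if wl: "w \<in> l2" and wy: "Q (\<lambda>i. w i - y i) < \<epsilon>\<^sup>2" for w
  proof -
    have wyl: "(\<lambda>i. w i - y i) \<in> l2" using Q_comb[OF wl yl, of "\<lambda>i. w i - y i"] by auto
    have yzl: "(\<lambda>i. y i - z i) \<in> l2" using Q_comb[OF yl zl, of "\<lambda>i. y i - z i"] by auto
    have "Q (\<lambda>i. w i - z i) \<le> 2 * Q (\<lambda>i. w i - y i) + 2 * Q (\<lambda>i. y i - z i)"
    proof -
      have "\<bar>w i - z i\<bar> \<le> \<bar>w i - y i\<bar> + \<bar>y i - z i\<bar>" for i by arith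
      then show ?thesis using Q_comb[OF wyl yzl, of "\<lambda>i. w i - z i"] by blast
    qed
    moreover have "Q (\<lambda>i. y i - z i) < \<rho>\<^sup>2" using Qzy Q_sym[of y z] by simp
    moreover have "(dd/2)\<^sup>2 = dd\<^sup>2 / 4" by (simp add: power_divide)
    ultimately have "Q (\<lambda>i. w i - z i) < dd\<^sup>2" using wy e2 \<rho>2 by linarith
    then show ?thesis using Uz wl by blast
  qed
  obtain n0 where n0: "\<forall>n\<ge>n0. Q (\<lambda>i. y (i + n)) < \<epsilon>\<^sup>2 / 64"
    using tail_small[OF yl, of "\<epsilon>\<^sup>2 / 64"] epos by auto
  define n where "n = max n0 (max a (Suc N))"
  have n_ge: "n0 \<le> n" "a \<le> n" "N < n" "0 < n" by (auto simp: n_def)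
  have ty: "Q (\<lambda>i. y (i + n)) < \<epsilon>\<^sup>2 / 64" using n0 n_ge by blast
  have mpos: "0 < min (min c (\<epsilon> / 8)) (1 / 2 ^ n)" using cpos epos by simp
  obtain q where q: "q \<in> \<rat>" "0 < q" "q < min (min c (\<epsilon> / 8)) (1 / 2 ^ n)"
    using Rats_dense_in_real[OF mpos] by blast
  obtain \<eta> :: rat where qe: "q = real_of_rat \<eta>" using q(1) Rats_cases by blast
  define E where "E = real_of_rat \<eta>"
  have E: "0 < E" "E \<le> c" "E \<le> \<epsilon> / 8" "E < 1 / 2 ^ n" using q qe by (auto simp: E_def)
  have eta0: "0 < \<eta>" using E(1) by (simp add: E_def)
  have eta_n: "\<eta> < 1 / 2 ^ n"
  proof -
    have "real_of_rat \<eta> < real_of_rat (1 / 2 ^ n)" using E(4) by (simp add: E_def of_rat_divide of_rat_power)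
    then show ?thesis by (simp only: of_rat_less)
  qed
  have eta1: "\<eta> < 1"
  proof -
    have "(1::rat) / 2 ^ n \<le> 1" by simp
    then show ?thesis using eta_n by linarith
  qed
  define \<theta> where "\<theta> = E / sqrt (real n)"
  have \<theta>pos: "0 < \<theta>" using E(1) n_ge by (simp add: \<theta>_def)
  have "\<forall>m. \<exists>q::rat. \<bar>real_of_rat q - y m\<bar> < \<theta>"
  proof
    fix m
    obtain t where t: "t \<in> \<rat>" "y m - \<theta> < t" "t < y m + \<theta>"
      using Rats_dense_in_real[of "y m - \<theta>" "y m + \<theta>"] \<theta>pos by auto
    obtain q where "t = real_of_rat q" using t(1) Rats_cases by blast
    then show "\<exists>q::rat. \<bar>real_of_rat q - y m\<bar> < \<theta>" using t by (intro exI[of _ q]) auto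
  qed
  then obtain f where f: "\<And>m. \<bar>real_of_rat (f m) - y m\<bar> < \<theta>" by metis
  define s where "s = map f [0..<n]"
  define \<beta> where "\<beta> = \<alpha> @ replicate (n - a) (1::nat)"
  have slen: "length s = n" by (simp add: s_def)
  have blen: "length \<beta> = n" using n_ge by (simp add: \<beta>_def a_def)
  have sne: "s \<noteq> []" using slen n_ge by auto
  have snth: "\<And>m. m < n \<Longrightarrow> s ! m = f m" by (simp add: s_def)
  have Umem: "x \<in> l2 \<and> (\<forall>m<n. \<bar>x m - y m\<bar> \<le> 2 * E / sqrt n) \<and> Q (\<lambda>i. x (i + n)) < E\<^sup>2"
    if xU: "x \<in> U s \<eta>" for x
  proof -
    have xl: "x \<in> l2" and xc: "\<forall>i<n. \<bar>x i - real_of_rat (s ! i)\<bar> < E / sqrt (real n)"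
      and xt: "l2norm (\<lambda>i. x (i + n)) < E"
      using xU sne slen by (auto simp: U_def E_def)
    have "\<bar>x m - y m\<bar> \<le> 2 * E / sqrt n" if "m < n" for m
    proof -
      have "\<bar>x m - real_of_rat (f m)\<bar> < \<theta>" using xc that snth by (simp add: \<theta>_def)
      then show ?thesis using f[of m] by (simp add: \<theta>_def)
    qed
    moreover have "Q (\<lambda>i. x (i + n)) < E\<^sup>2"
      using sq_lt_of_sqrt[OF Q_nonneg[OF l2_shift[OF xl]]] xt by (simp add: l2norm_Q)
    ultimately show ?thesis using xl by blast
  qed
  have ClA: "Q (\<lambda>i. x i - y i) < \<epsilon>\<^sup>2 / 4" if xU: "x \<in> U s \<eta>" for x
  proof -
    have xl: "x \<in> l2" and hd: "\<And>m. m < n \<Longrightarrow> \<bar>x m - y m\<bar> \<le> 2 * E / sqrt n"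
      and xt: "Q (\<lambda>i. x (i + n)) < E\<^sup>2" using Umem[OF xU] by auto
    have xyl: "(\<lambda>i. x i - y i) \<in> l2" using Q_comb[OF xl yl, of "\<lambda>i. x i - y i"] by auto
    have sp: "Q (\<lambda>i. x i - y i) = (\<Sum>m<n. (x m - y m)\<^sup>2) + Q (\<lambda>i. x (i + n) - y (i + n))"
      using Q_split[OF xyl, of n] by simp
    have "(\<Sum>m<n. (x m - y m)\<^sup>2) \<le> (\<Sum>m<n. 4 * E\<^sup>2 / n)"
    proof (rule sum_mono)
      fix m assume "m \<in> {..<n}"
      then have "\<bar>x m - y m\<bar>\<^sup>2 \<le> (2 * E / sqrt n)\<^sup>2" using hd by (intro power_mono) auto
      also have "\<dots> = 4 * E\<^sup>2 / n" using n_ge by (simp add: power_divide power_mult_distrib)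
      finally show "(x m - y m)\<^sup>2 \<le> 4 * E\<^sup>2 / n" by simp
    qed
    also have "\<dots> = 4 * E\<^sup>2" using n_ge by simp
    finally have h1: "(\<Sum>m<n. (x m - y m)\<^sup>2) \<le> 4 * E\<^sup>2" .
    have "Q (\<lambda>i. x (i + n) - y (i + n)) \<le> 2 * Q (\<lambda>i. x (i + n)) + 2 * Q (\<lambda>i. y (i + n))"
      using Q_comb[OF l2_shift[OF xl] l2_shift[OF yl], of "\<lambda>i. x (i + n) - y (i + n)"] by simp
    then have h2: "Q (\<lambda>i. x (i + n) - y (i + n)) < 2 * E\<^sup>2 + 2 * (\<epsilon>\<^sup>2 / 64)" using xt ty by linarith
    have "E\<^sup>2 \<le> (\<epsilon> / 8)\<^sup>2" using E by (intro power_mono) auto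
    then have h3: "E\<^sup>2 \<le> \<epsilon>\<^sup>2 / 64" by (simp add: power_divide)
    have "0 < \<epsilon>\<^sup>2" using epos by simp
    then show ?thesis using sp h1 h2 h3 by linarith
  qed
  have UD: "U s \<eta> \<subseteq> D"
  proof
    fix x assume xU: "x \<in> U s \<eta>"
    have "x \<in> l2" using Umem[OF xU] by blast
    moreover have "Q (\<lambda>i. x i - y i) < \<epsilon>\<^sup>2"
    proof -
      have "0 < \<epsilon>\<^sup>2" using epos by simp
      then show ?thesis using ClA[OF xU] by linarith
    qed
    ultimately show "x \<in> D" using P2 by blast
  qed
  have Ucl: "l2_closure (U s \<eta>) \<subseteq> U r \<delta>"
  proof
    fix w assume "w \<in> l2_closure (U s \<eta>)"
    then have wl: "w \<in> l2" and cl: "\<forall>e>0. \<exists>x\<in>U s \<eta>. l2dist w x < e" by (auto simp: l2_closure_def)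
    have e2pos: "0 < \<epsilon> / 2" using epos by simp
    obtain x where xU: "x \<in> U s \<eta>" and wx: "l2dist w x < \<epsilon> / 2" using cl e2pos by blast
    have xl: "x \<in> l2" using Umem[OF xU] by blast
    have wxQ: "Q (\<lambda>i. w i - x i) < (\<epsilon> / 2)\<^sup>2" using wx l2dist_Q[OF e2pos wl xl] by simp
    have wxl: "(\<lambda>i. w i - x i) \<in> l2" using Q_comb[OF wl xl, of "\<lambda>i. w i - x i"] by auto
    have xyl: "(\<lambda>i. x i - y i) \<in> l2" using Q_comb[OF xl yl, of "\<lambda>i. x i - y i"] by auto
    have "Q (\<lambda>i. w i - y i) \<le> 2 * Q (\<lambda>i. w i - x i) + 2 * Q (\<lambda>i. x i - y i)"
    proof -
      have "\<bar>w i - y i\<bar> \<le> \<bar>w i - x i\<bar> + \<bar>x i - y i\<bar>" for i by arith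
      then show ?thesis using Q_comb[OF wxl xyl, of "\<lambda>i. w i - y i"] by blast
    qed
    moreover have "(\<epsilon> / 2)\<^sup>2 = \<epsilon>\<^sup>2 / 4" by (simp add: power_divide)
    ultimately have "Q (\<lambda>i. w i - y i) < \<epsilon>\<^sup>2" using wxQ ClA[OF xU] by linarith
    then show "w \<in> U r \<delta>" using P3 wl by blast
  qed
  have wprop: "\<And>i. real (plus_seq \<beta> i) \<le> 2" "\<And>i. a \<le> i \<Longrightarrow> i < n \<Longrightarrow> plus_seq \<beta> i = 1"
  proof -
    fix i
    show "real (plus_seq \<beta> i) \<le> 2"
    proof (cases "i < n")
      case True
      have "\<beta> ! i \<in> set \<beta>" using True blen by simp
      moreover have "set \<beta> \<subseteq> {1, 2}" using a12 by (auto simp: \<beta>_def)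
      ultimately have "\<beta> ! i \<le> 2" by auto
      then show ?thesis using True blen by (simp add: plus_seq_def)
    next
      case False then show ?thesis using blen by (simp add: plus_seq_def)
    qed
  next
    fix i assume "a \<le> i" "i < n"
    then show "plus_seq \<beta> i = 1" using blen by (simp add: plus_seq_def \<beta>_def nth_append a_def)
  qed
  have shift: "l2norm ((Bw (plus_seq \<beta>) ^^ k) x) < 1" if "length \<alpha> \<le> k" "k < length \<beta>" "x \<in> U s \<eta>" for k x
  proof -
    have xl: "x \<in> l2" and hd: "\<And>m. m < n \<Longrightarrow> \<bar>x m - y m\<bar> \<le> 2 * E / sqrt n"
      and xt: "Q (\<lambda>i. x (i + n)) < E\<^sup>2" using Umem[OF that(3)] by auto
    have En: "2 ^ n * E < 1" using E(4) by (simp add: field_simps)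
    have zyc: "Q (\<lambda>i. z i - y i) \<le> c\<^sup>2" using Qzy \<rho>2 by linarith
    have "Q ((Bw (plus_seq \<beta>) ^^ k) x) < 1"
      by (rule shift_bound[OF xl yl zl wprop(1) wprop(2) _ _ _ hd xt z0 zyc E(2) c_def En])
        (use that blen E in \<open>auto simp: a_def\<close>)
    then show ?thesis unfolding l2norm_Q by simp
  qed
  have cond: "is_condition \<beta> s \<eta>"
    unfolding is_condition_def using a12 eta0 eta1 eta_n blen slen by (auto simp: \<beta>_def)
  have less: "cond_less \<beta> s \<eta> \<alpha> r \<delta>"
    unfolding cond_less_def using Ucl shift by (auto simp: \<beta>_def)
  show ?thesis using cond less UD blen n_ge by blast
qed

end
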